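(* Let $1\le e\le N$ and $1\le i<j\le n$. Then $w_{R,e,i,j}\equiv a_{R,i,j}^{p^{e-1}}\pmod{\mathfrak m_{K_R}^{-p^{e-1}\mu_{i,j}+1}}$ and $v_{K_R}(w_{R,e,i,j})\ge -p^{e-1}\mu_{i,j}$, with equality if and only if $m_{i,j}=\mu_{i,j}$. Moreover $w^*_{R,e,i,j}\equiv (a^*_{R,i,j})^{p^{e-1}}\pmod{\mathfrak m_{K_R}^{-p^{e-1}\mu_{i,j}+1}}$ and $v_{K_R}(w^*_{R,e,i,j})\ge -p^{e-1}\mu_{i,j}$, with equality if and only if $v_K(a^*_{i,j})=-\mu_{i,j}$.
   Context: Let $p$ be a prime and $K$ a complete discrete valuation field of characteristic $p$ with algebraically closed residue field $k$, normalized valuation $v_K$. Fix $t\in K$ with $v_K(t)=-1$; every $x\in K$ is uniquely $\sum_{l\ge v_K(x)}x_lt^{-l}$ with $x_l\in k$, and $\mathrm{coef}_{K,l}(x)=x_l$. $UT_n(F)$ denotes upper unitriangular $n\times n$ matrices over $F$; $X^{(p^m)}$ raises every entry of $X$ to the $p^m$-th power. For $X=(x_{i,j})\in UT_n(K)$ put $v_K(X)=\min_{i<j}v_K(x_{i,j})/(j-i)$. Let $n\ge2$ and $L/K$ a totally wildly ramified finite Galois extension with $\mathrm{Gal}(L/K)\cong UT_n(\mathbb F_p)$. Fix $A=(a_{i,j})\in UT_n(K)$ with $\mathrm{coef}_{K,l}(a_{i,j})=0$ for all $i<j$ and $l\in p\mathbb Z\cup\mathbb Z_{\ge0}$, such that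 $X^{(p)}A=X$ has a solution $\Theta\in UT_n(L)$ whose entries generate $L$ over $K$. Let $a^*_{i,j}$ denote the entries of $A^{-1}$. Put $m_A=-v_K(A)$, fix an integer $N>\log_p\big(n(p^{n(n-1)/2}+1)m_A+p\big)+\frac{n(n-1)}2$ and $q=p^N$. For a positive integer $R$ prime to $p$ let $K_R=K(T)$ with $T^q+T^{q-1}=t^R$, with normalized valuation $v_{K_R}$ and maximal ideal $\mathfrak m_{K_R}$; for an integer $a$, $\mathfrak m_{K_R}^{a}=\{x\in K_R: v_{K_R}(x)\ge a\}$. Let $t_R\in\overline K$ be the $qR$-th root of $t^R(1+T^{-1})^{-1}$ congruent to $t^{1/q}$ modulo $t^{1/q}\mathfrak m_{\overline K}$ (so $t_R\in K_R$, $v_{K_R}(t_R)=-1$). Let $\iota_R:K\to K_R$ be the ring isomorphism $\sum_lx_lt^{-l}\mapsto\sum_lx_l^{1/q}t_R^{-l}$, applied entrywise. Put $A_R=\iota_R(A)=(a_{R,i,j})$, let $a^*_{R,i,j}$ denote the entries of $A_R^{-1}$, and let $W_{R,0}=I$, $W_{R,e}=A_R^{(p^{e-1})}W_{R,e-1}$ ($1\le e\le N$), with entries $w_{R,e,i,j}$; $w^*_{R,e,i,j}$ are the entries of $W_{R,e}^{-1}$. For $1\le i<j\le n$ let $m_{i,j}=-v_K(a_{i,j})$ ($=-\infty$ if $a_{i,j}=0$). A partition for $(i,j)$ is a sequence of integers $i=\lambda_0<\lambda_1<\dots<\lambda_s=j$, of length $|\lambda|=s$; $m_\lambda=\sum_{u=0}^{|\lambda|-1}m_{\lambda_u,\lambda_{u+1}}$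 and $\mu_{i,j}=\max m_\lambda$ over all partitions for $(i,j)$. *)

theory Defs
  imports "HOL-Computational_Algebra.Polynomial" "HOL-Computational_Algebra.Formal_Laurent_Series"
    "HOL-Library.Extended_Real"
begin

text \<open>Elements of K (resp. K_R) are Laurent series over the residue field k in the
 uniformizer X = t^(-1) (resp. t_R^(-1)): x = sum_l x_l t^(-l) corresponds to the fls with
 nth coefficient x_l.  Matrices are functions nat => nat => _, indices 1..n.\<close>

definition val :: "'k::field fls \<Rightarrow> ereal" where
  "val x = (if x = 0 then \<infinity> else ereal (real_of_int (fls_subdegree x)))"

definition coef :: "'k::field fls \<Rightarrow> int \<Rightarrow> 'k" where
  "coef x l = fls_nth x l"

definition idm :: "nat \<Rightarrow> nat \<Rightarrow> 'a::{zero,one}" where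
  "idm i j = (if i = j then 1 else 0)"

definition mat_mul :: "nat \<Rightarrow> (nat \<Rightarrow> nat \<Rightarrow> 'a::comm_ring_1) \<Rightarrow> (nat \<Rightarrow> nat \<Rightarrow> 'a) \<Rightarrow> nat \<Rightarrow> nat \<Rightarrow> 'a" where
  "mat_mul n X Y = (\<lambda>i j. \<Sum>k\<in>{1..n}. X i k * Y k j)"

definition is_UT :: "nat \<Rightarrow> (nat \<Rightarrow> nat \<Rightarrow> 'a::{zero,one}) \<Rightarrow> bool" where
  "is_UT n X \<longleftrightarrow> (\<forall>i\<in>{1..n}. \<forall>j\<in>{1..n}. (i = j \<longrightarrow> X i j = 1) \<and> (j < i \<longrightarrow> X i j = 0))"

definition mat_inv :: "nat \<Rightarrow> (nat \<Rightarrow> nat \<Rightarrow> 'a::comm_ring_1) \<Rightarrow> nat \<Rightarrow> nat \<Rightarrow> 'a" where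
  "mat_inv n X = (THE Y. (\<forall>i\<in>{1..n}. \<forall>j\<in>{1..n}. mat_mul n X Y i j = idm i j)
                        \<and> (\<forall>i j. \<not> (i \<in> {1..n} \<and> j \<in> {1..n}) \<longrightarrow> Y i j = 0))"

definition frob :: "nat \<Rightarrow> nat \<Rightarrow> (nat \<Rightarrow> nat \<Rightarrow> 'a::comm_ring_1) \<Rightarrow> nat \<Rightarrow> nat \<Rightarrow> 'a" where
  "frob p m X = (\<lambda>i j. X i j ^ (p ^ m))"

definition qroot :: "nat \<Rightarrow> 'k::field \<Rightarrow> 'k" where
  "qroot q c = (THE y. y ^ q = c)"

definition iota :: "nat \<Rightarrow> 'k::field fls \<Rightarrow> 'k fls" where
  "iota q x = Abs_fls (\<lambda>l. qroot q (fls_nth x l))"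

primrec Wseq :: "nat \<Rightarrow> nat \<Rightarrow> (nat \<Rightarrow> nat \<Rightarrow> 'a::comm_ring_1) \<Rightarrow> nat \<Rightarrow> nat \<Rightarrow> nat \<Rightarrow> 'a" where
  "Wseq p n B 0 = idm"
| "Wseq p n B (Suc e) = mat_mul n (frob p e B) (Wseq p n B e)"

definition vUT :: "nat \<Rightarrow> (nat \<Rightarrow> nat \<Rightarrow> 'k::field fls) \<Rightarrow> ereal" where
  "vUT n X = Min {val (X i j) / ereal (real (j - i)) | i j. 1 \<le> i \<and> i < j \<and> j \<le> n}"

definition partitions :: "nat \<Rightarrow> nat \<Rightarrow> nat list set" where
  "partitions i j = {ls. ls \<noteq> [] \<and> hd ls = i \<and> last ls = j \<and> sorted_wrt (<) ls}"

definition mexp :: "(nat \<Rightarrow> nat \<Rightarrow> 'k::field fls) \<Rightarrow> nat \<Rightarrow> nat \<Rightarrow> ereal" where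
  "mexp A i j = - val (A i j)"

definition m_part :: "(nat \<Rightarrow> nat \<Rightarrow> 'k::field fls) \<Rightarrow> nat list \<Rightarrow> ereal" where
  "m_part A ls = (\<Sum>u<length ls - 1. mexp A (ls ! u) (ls ! (u + 1)))"

definition mu :: "(nat \<Rightarrow> nat \<Rightarrow> 'k::field fls) \<Rightarrow> nat \<Rightarrow> nat \<Rightarrow> ereal" where
  "mu A i j = Max (m_part A ` partitions i j)"

end

theory Submission
  imports Defs
begin


section \<open>Frobenius and q-th roots\<close>

lemma frob_add_k:
  fixes x y :: "'a::comm_semiring_1"
  assumes "prime CHAR('a)" "q = CHAR('a) ^ N"
  shows "(x + y) ^ q = x ^ q + y ^ q"
  using freshmans_dream'[OF assms] .

lemma frob_inj_k:
  fixes y z :: "'a::field"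
  assumes "prime CHAR('a)" "q = CHAR('a) ^ N" and "y ^ q = z ^ q"
  shows "y = z"
proof -
  have "((y - z) + z) ^ q = (y - z) ^ q + z ^ q" using frob_add_k[OF assms(1,2)] .
  hence "(y - z) ^ q = 0" using assms(3) by simp
  hence "y - z = 0" by simp
  thus ?thesis by simp
qed

lemma root_exists_k:
  fixes c :: "'a::alg_closed_field"
  assumes "q > 0"
  shows "\<exists>y. y ^ q = c"
proof -
  define f where "f = (\<lambda>k::nat. if k = q then (1::'a) else if k = 0 then -c else 0)"
  have "f q \<noteq> 0" by (simp add: f_def)
  then obtain x where x: "(\<Sum>k\<le>q. f k * x ^ k) = 0" using alg_closed[OF assms] by blast
  obtain q' where q': "q = Suc q'" using assms by (cases q) auto
  have "(\<Sum>k\<le>q. f k * x ^ k) = (\<Sum>k\<le>q'. f k * x ^ k) + f q * x ^ q"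
    by (simp add: q')
  also have "(\<Sum>k\<le>q'. f k * x ^ k) = (\<Sum>k\<le>q'. if k = 0 then -c else 0)"
    by (rule sum.cong) (auto simp: f_def q')
  also have "\<dots> = -c" by (simp add: sum.delta)
  finally have "x ^ q - c = 0" using x by (simp add: f_def)
  thus ?thesis by auto
qed

locale charp =
  fixes p N q :: nat
  assumes prime_p: "prime p" and char_p: "CHAR('k::alg_closed_field) = p" and q_def: "q = p ^ N"
begin

lemma q_pos: "q > 0" using prime_p q_def prime_gt_0_nat by simp

lemma charK: "prime CHAR('k)" using prime_p char_p by simp
lemma qK: "q = CHAR('k) ^ N" using q_def char_p by simp

lemma qroot_pow: "qroot q (c::'k) ^ q = c"
proof -
  have ex: "\<exists>!y::'k. y ^ q = c"
  proof -
    obtain y :: 'k where "y ^ q = c" using root_exists_k[OF q_pos] by blast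
    moreover have "z = y" if "z ^ q = c" for z :: 'k
      using frob_inj_k[OF charK qK, of z y] that \<open>y ^ q = c\<close> by simp
    ultimately show ?thesis by blast
  qed
  show ?thesis unfolding qroot_def by (rule theI'[OF ex])
qed

lemma qroot_unique: "(y::'k) ^ q = c \<Longrightarrow> qroot q c = y"
  using frob_inj_k[OF charK qK, of "qroot q c" y] qroot_pow by simp

lemma qroot_0 [simp]: "qroot q (0::'k) = 0"
  by (rule qroot_unique) (simp add: q_pos)

lemma qroot_1 [simp]: "qroot q (1::'k) = 1"
  by (rule qroot_unique) simp

lemma qroot_add: "qroot q ((a::'k) + b) = qroot q a + qroot q b"
proof (rule qroot_unique)
  show "(qroot q a + qroot q b) ^ q = a + b"
    using frob_add_k[OF charK qK, of "qroot q a" "qroot q b"] by (simp only: qroot_pow)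
qed

lemma qroot_mult: "qroot q ((a::'k) * b) = qroot q a * qroot q b"
  by (rule qroot_unique) (simp add: power_mult_distrib qroot_pow)

lemma qroot_eq_0_iff [simp]: "qroot q (a::'k) = 0 \<longleftrightarrow> a = 0"
  by (metis qroot_0 qroot_pow)

lemma qroot_uminus: "qroot q (- (a::'k)) = - qroot q a"
  using qroot_add[of a "-a"] by (simp add: add_eq_0_iff)

lemma qroot_diff: "qroot q ((a::'k) - b) = qroot q a - qroot q b"
  using qroot_add[of a "-b"] qroot_uminus[of b] by simp

lemma qroot_sum: "qroot q (\<Sum>x\<in>S. (f x::'k)) = (\<Sum>x\<in>S. qroot q (f x))"
  by (induction S rule: infinite_finite_induct) (auto simp: qroot_add)

lemma iota_nth: "fls_nth (iota q (x::'k fls)) l = qroot q (fls_nth x l)"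
  unfolding iota_def
  by (rule nth_Abs_fls_lower_bound[of "fls_subdegree x"]) (simp add: nth_less_subdegree_zero)

lemma iota_add: "iota q ((x::'k fls) + y) = iota q x + iota q y"
  by (rule fls_eqI) (simp add: iota_nth qroot_add)

lemma iota_diff: "iota q ((x::'k fls) - y) = iota q x - iota q y"
  by (rule fls_eqI) (simp add: iota_nth qroot_diff)

lemma iota_0 [simp]: "iota q (0::'k fls) = 0"
  by (rule fls_eqI) (simp add: iota_nth)

lemma iota_1 [simp]: "iota q (1::'k fls) = 1"
  by (rule fls_eqI) (simp add: iota_nth)

lemma iota_eq_0_iff [simp]: "iota q (x::'k fls) = 0 \<longleftrightarrow> x = 0"
  by (auto simp: fls_eq_iff iota_nth)

lemma iota_subdegree: "fls_subdegree (iota q (x::'k fls)) = fls_subdegree x"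
proof (cases "x = 0")
  case False
  show ?thesis
    by (rule fls_subdegree_eqI) (use False in \<open>auto simp: iota_nth nth_less_subdegree_zero\<close>)
qed simp

lemma val_iota: "val (iota q (x::'k fls)) = val x"
  by (simp add: val_def iota_subdegree)

lemma iota_mult: "iota q ((x::'k fls) * y) = iota q x * iota q y"
proof (rule fls_eqI)
  fix l
  show "fls_nth (iota q (x * y)) l = fls_nth (iota q x * iota q y) l"
    by (simp add: iota_nth fls_times_nth(2) iota_subdegree qroot_sum qroot_mult)
qed

lemma iota_sum: "iota q (\<Sum>x\<in>S. (f x::'k fls)) = (\<Sum>x\<in>S. iota q (f x))"
  by (induction S rule: infinite_finite_induct) (auto simp: iota_add)

end




lemma UT_diag: "is_UT n X \<Longrightarrow> i \<in> {1..n} \<Longrightarrow> X i i = 1"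
  by (auto simp: is_UT_def)
lemma UT_low: "is_UT n X \<Longrightarrow> i \<in> {1..n} \<Longrightarrow> j \<in> {1..n} \<Longrightarrow> j < i \<Longrightarrow> X i j = 0"
  by (auto simp: is_UT_def)

lemma mat_mul_UT_sum:
  assumes "is_UT n X" "is_UT n Y" "i \<in> {1..n}" "j \<in> {1..n}"
  shows "mat_mul n X Y i j = (\<Sum>k\<in>{i..j}. X i k * Y k j)"
  unfolding mat_mul_def
proof (rule sum.mono_neutral_right)
  show "{i..j} \<subseteq> {1..n}" using assms(3,4) by auto
  show "\<forall>k\<in>{1..n} - {i..j}. X i k * Y k j = 0"
    using assms by (auto simp: is_UT_def)
qed simp

lemma UT_mul: "is_UT n X \<Longrightarrow> is_UT n Y \<Longrightarrow> is_UT n (mat_mul n X Y)"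
  unfolding is_UT_def[of n "mat_mul n X Y"]
  by (auto simp: mat_mul_UT_sum UT_diag)

lemma UT_idm: "is_UT n (idm :: nat \<Rightarrow> nat \<Rightarrow> 'a::{zero,one})"
  by (auto simp: is_UT_def idm_def)

lemma UT_frob: "p > 0 \<Longrightarrow> is_UT n X \<Longrightarrow> is_UT n (frob p e X)"
  by (auto simp: is_UT_def frob_def zero_power)

lemma UT_Wseq: "p > 0 \<Longrightarrow> is_UT n B \<Longrightarrow> is_UT n (Wseq p n B e)"
  by (induction e) (auto intro: UT_mul UT_frob UT_idm)

lemma mat_mul_assoc: "mat_mul n (mat_mul n X Y) Z = mat_mul n X (mat_mul n Y Z)"
  unfolding mat_mul_def
  by (auto simp: fun_eq_iff sum_distrib_left sum_distrib_right mult.assoc intro: sum.swap)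

lemma mat_mul_cong_right:
  "(\<And>k. k \<in> {1..n} \<Longrightarrow> Y k j = Y' k j) \<Longrightarrow> mat_mul n X Y i j = mat_mul n X Y' i j"
  unfolding mat_mul_def by (rule sum.cong) auto

lemma mat_mul_cong_left:
  "(\<And>k. k \<in> {1..n} \<Longrightarrow> X i k = X' i k) \<Longrightarrow> mat_mul n X Y i j = mat_mul n X' Y i j"
  unfolding mat_mul_def by (rule sum.cong) auto

lemma mat_mul_idm_right: "j \<in> {1..n} \<Longrightarrow> mat_mul n X idm i j = X i j"
  unfolding mat_mul_def idm_def by (simp add: sum.delta' if_distrib cong: if_cong)

lemma mat_mul_idm_left: "i \<in> {1..n} \<Longrightarrow> mat_mul n idm X i j = X i j"
proof -
  assume i: "i \<in> {1..n}"
  have "mat_mul n idm X i j = (\<Sum>k\<in>{1..n}. if k = i then X i j else 0)"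
    unfolding mat_mul_def idm_def by (rule sum.cong) auto
  thus ?thesis using i by (simp add: sum.delta)
qed

lemma mat_mul_idm_outside: "i \<notin> {1..n} \<Longrightarrow> mat_mul n idm X i j = 0"
  unfolding mat_mul_def idm_def by (rule sum.neutral) auto

lemma UT_right_inv_unique:
  assumes UT: "is_UT n X"
    and Y: "\<forall>i\<in>{1..n}. \<forall>j\<in>{1..n}. mat_mul n X Y i j = idm i j"
    and Y': "\<forall>i\<in>{1..n}. \<forall>j\<in>{1..n}. mat_mul n X Y' i j = idm i j"
    and j: "j \<in> {1..n}"
  shows "i \<in> {1..n} \<Longrightarrow> Y i j = Y' i j"
proof (induction "n - i" arbitrary: i rule: less_induct)
  case less
  define D where "D = (\<lambda>a b. Y a b - Y' a b)"
  have "mat_mul n X D i j = mat_mul n X Y i j - mat_mul n X Y' i j"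
    unfolding mat_mul_def D_def by (simp add: right_diff_distrib sum_subtractf)
  hence z: "mat_mul n X D i j = 0" using Y Y' less.prems j by simp
  have "mat_mul n X D i j = (\<Sum>k\<in>{1..n}. if k = i then D i j else 0)"
    unfolding mat_mul_def
  proof (rule sum.cong)
    fix k assume k: "k \<in> {1..n}"
    show "X i k * D k j = (if k = i then D i j else 0)"
    proof (cases "k < i")
      case True thus ?thesis using UT_low[OF UT less.prems k] by simp
    next
      case False
      show ?thesis
      proof (cases "k = i")
        case True thus ?thesis using UT_diag[OF UT less.prems] by simp
      next
        case False
        with \<open>\<not> k < i\<close> have "i < k" by simp
        hence "n - k < n - i" using k by auto
        hence "Y k j = Y' k j" using less.hyps k by blast
        thus ?thesis using False by (simp add: D_def)
      qed
    qed
  qed simp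
  also have "\<dots> = D i j" using less.prems by (simp add: sum.delta)
  finally show ?case using z by (simp add: D_def)
qed

lemma mat_inv_eqI:
  assumes UT: "is_UT n X"
    and Y: "\<forall>i\<in>{1..n}. \<forall>j\<in>{1..n}. mat_mul n X Y i j = idm i j"
    and Z: "\<forall>i j. \<not> (i \<in> {1..n} \<and> j \<in> {1..n}) \<longrightarrow> Y i j = 0"
  shows "mat_inv n X = Y"
  unfolding mat_inv_def
proof (rule the_equality)
  show "(\<forall>i\<in>{1..n}. \<forall>j\<in>{1..n}. mat_mul n X Y i j = idm i j) \<and>
    (\<forall>i j. \<not> (i \<in> {1..n} \<and> j \<in> {1..n}) \<longrightarrow> Y i j = 0)" using Y Z by blast
next
  fix Y' assume H: "(\<forall>i\<in>{1..n}. \<forall>j\<in>{1..n}. mat_mul n X Y' i j = idm i j) \<and>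
    (\<forall>i j. \<not> (i \<in> {1..n} \<and> j \<in> {1..n}) \<longrightarrow> Y' i j = 0)"
  show "Y' = Y"
  proof (rule ext, rule ext)
    fix i j
    show "Y' i j = Y i j"
    proof (cases "i \<in> {1..n} \<and> j \<in> {1..n}")
      case True
      thus ?thesis using UT_right_inv_unique[OF UT conjunct1[OF H] Y] by blast
    next
      case False thus ?thesis using H Z by auto
    qed
  qed
qed

function uinv :: "(nat \<Rightarrow> nat \<Rightarrow> 'a::comm_ring_1) \<Rightarrow> nat \<Rightarrow> nat \<Rightarrow> 'a" where
  "uinv X i j = (if i < j then - (\<Sum>k\<in>{i<..j}. X i k * uinv X k j) else if i = j then 1 else 0)"
  by auto
termination by (relation "measure (\<lambda>(X,i,j). j - i)") auto

declare uinv.simps [simp del]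

definition uinvR :: "nat \<Rightarrow> (nat \<Rightarrow> nat \<Rightarrow> 'a::comm_ring_1) \<Rightarrow> nat \<Rightarrow> nat \<Rightarrow> 'a" where
  "uinvR n X = (\<lambda>i j. if i \<in> {1..n} \<and> j \<in> {1..n} then uinv X i j else 0)"

lemma uinvR_UT: "is_UT n (uinvR n X)"
  by (auto simp: is_UT_def uinvR_def uinv.simps)

lemma uinvR_inv:
  assumes UT: "is_UT n X" and i: "i \<in> {1..n}" and j: "j \<in> {1..n}"
  shows "mat_mul n X (uinvR n X) i j = idm i j"
proof -
  have s: "mat_mul n X (uinvR n X) i j = (\<Sum>k\<in>{i..j}. X i k * uinv X k j)"
    using mat_mul_UT_sum[OF UT uinvR_UT i j] i j by (auto simp: uinvR_def intro!: sum.cong)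
  show ?thesis
  proof (cases "i < j")
    case True
    have "{i..j} = insert i {i<..j}" using True by auto
    hence "(\<Sum>k\<in>{i..j}. X i k * uinv X k j) = X i i * uinv X i j + (\<Sum>k\<in>{i<..j}. X i k * uinv X k j)"
      by simp
    also have "\<dots> = 0" using True UT_diag[OF UT i] by (subst uinv.simps) simp
    finally show ?thesis using s True by (simp add: idm_def)
  next
    case False
    thus ?thesis using s UT_diag[OF UT i] by (cases "i = j") (auto simp: idm_def uinv.simps)
  qed
qed

lemma mat_inv_UT:
  assumes "is_UT n X"
  shows "mat_inv n X = uinvR n X"
proof (rule mat_inv_eqI[OF assms])
  show "\<forall>i\<in>{1..n}. \<forall>j\<in>{1..n}. mat_mul n X (uinvR n X) i j = idm i j"
    using uinvR_inv[OF assms] by blast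
qed (simp add: uinvR_def)

lemma mat_inv_is_UT: "is_UT n X \<Longrightarrow> is_UT n (mat_inv n X)"
  by (simp add: mat_inv_UT uinvR_UT)

lemma mat_inv_right: "is_UT n X \<Longrightarrow> i \<in> {1..n} \<Longrightarrow> j \<in> {1..n} \<Longrightarrow> mat_mul n X (mat_inv n X) i j = idm i j"
  by (simp add: mat_inv_UT uinvR_inv)

lemma mat_inv_outside: "is_UT n X \<Longrightarrow> \<not> (i \<in> {1..n} \<and> j \<in> {1..n}) \<Longrightarrow> mat_inv n X i j = 0"
  unfolding mat_inv_UT uinvR_def by (simp only: if_False simp_thms)

lemma mat_inv_rec:
  assumes "is_UT n X" "i \<in> {1..n}" "j \<in> {1..n}" "i < j"
  shows "mat_inv n X i j = - (\<Sum>k\<in>{i<..j}. X i k * mat_inv n X k j)"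
  using assms by (simp add: mat_inv_UT uinvR_def, subst uinv.simps, auto intro!: sum.cong)


lemma frob_mul:
  fixes X Y :: "nat \<Rightarrow> nat \<Rightarrow> 'a::comm_ring_1"
  assumes "prime CHAR('a)" "p = CHAR('a)"
  shows "mat_mul n (frob p e X) (frob p e Y) = frob p e (mat_mul n X Y)"
proof -
  have pe: "p ^ e = CHAR('a) ^ e" using assms(2) by simp
  show ?thesis
    unfolding mat_mul_def frob_def
    by (auto simp: fun_eq_iff freshmans_dream_sum'[OF assms(1) pe] power_mult_distrib)
qed

primrec Vseq :: "nat \<Rightarrow> nat \<Rightarrow> (nat \<Rightarrow> nat \<Rightarrow> 'a::comm_ring_1) \<Rightarrow> nat \<Rightarrow> nat \<Rightarrow> nat \<Rightarrow> 'a" where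
  "Vseq p n C 0 = idm"
| "Vseq p n C (Suc e) = mat_mul n (Vseq p n C e) (frob p e C)"

lemma UT_Vseq: "p > 0 \<Longrightarrow> is_UT n C \<Longrightarrow> is_UT n (Vseq p n C e)"
  by (induction e) (auto intro: UT_mul UT_frob UT_idm)

lemma WV_inv:
  fixes B :: "nat \<Rightarrow> nat \<Rightarrow> 'a::comm_ring_1"
  assumes ch: "prime CHAR('a)" "p = CHAR('a)" and UT: "is_UT n B"
  shows "\<forall>i\<in>{1..n}. \<forall>j\<in>{1..n}. mat_mul n (Wseq p n B e) (Vseq p n (mat_inv n B) e) i j = idm i j"
proof (induction e)
  case 0
  then show ?case by (simp add: mat_mul_idm_left)
next
  case (Suc e)
  define F where "F = frob p e B"
  define G where "G = frob p e (mat_inv n B)"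
  define W where "W = Wseq p n B e"
  define V where "V = Vseq p n (mat_inv n B) e"
  have FG: "mat_mul n F G i j = idm i j" if "i \<in> {1..n}" "j \<in> {1..n}" for i j
  proof -
    have "mat_mul n F G i j = (mat_mul n B (mat_inv n B) i j) ^ (p ^ e)"
      unfolding F_def G_def frob_mul[OF ch] by (simp add: frob_def)
    also have "\<dots> = idm i j ^ (p ^ e)" using mat_inv_right[OF UT that] by simp
    also have "\<dots> = idm i j" using ch prime_gt_0_nat[OF ch(1)] by (simp add: idm_def zero_power)
    finally show ?thesis .
  qed
  show ?case
  proof (intro ballI)
    fix i j assume i: "i \<in> {1..n}" and j: "j \<in> {1..n}"
    have "mat_mul n (Wseq p n B (Suc e)) (Vseq p n (mat_inv n B) (Suc e)) i j
        = mat_mul n F (mat_mul n (mat_mul n W V) G) i j"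
      by (simp add: F_def G_def W_def V_def mat_mul_assoc)
    also have "\<dots> = mat_mul n F G i j"
    proof (rule mat_mul_cong_right)
      fix k assume k: "k \<in> {1..n}"
      have "mat_mul n (mat_mul n W V) G k j = mat_mul n idm G k j"
        by (rule mat_mul_cong_left) (use Suc k in \<open>simp add: W_def V_def\<close>)
      also have "\<dots> = G k j" using k by (simp add: mat_mul_idm_left)
      finally show "mat_mul n (mat_mul n W V) G k j = G k j" .
    qed
    also have "\<dots> = idm i j" using FG i j by simp
    finally show "mat_mul n (Wseq p n B (Suc e)) (Vseq p n (mat_inv n B) (Suc e)) i j = idm i j" .
  qed
qed

lemma Vseq_outside:
  fixes C :: "nat \<Rightarrow> nat \<Rightarrow> 'a::comm_ring_1"
  assumes "p > 0" and C0: "\<And>i j. \<not> (i \<in> {1..n} \<and> j \<in> {1..n}) \<Longrightarrow> C i j = 0"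
  shows "\<not> (i \<in> {1..n} \<and> j \<in> {1..n}) \<Longrightarrow> Vseq p n C (Suc e) i j = 0"
proof (induction e arbitrary: i j)
  case 0
  show ?case
  proof (cases "i \<in> {1..n}")
    case True
    hence "j \<notin> {1..n}" using 0 by blast
    thus ?thesis using C0 assms(1) by (simp add: mat_mul_def frob_def zero_power)
  next
    case False
    thus ?thesis by (simp add: mat_mul_idm_outside)
  qed
next
  case (Suc e)
  show ?case
  proof (cases "i \<in> {1..n}")
    case True
    hence "j \<notin> {1..n}" using Suc.prems by blast
    thus ?thesis using C0 assms(1) by (simp add: mat_mul_def frob_def zero_power)
  next
    case False
    have "Vseq p n C (Suc e) i k = 0" for k using Suc.IH False by blast
    thus ?thesis by (simp add: mat_mul_def)
  qed
qed

lemma mat_inv_Wseq: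
  fixes B :: "nat \<Rightarrow> nat \<Rightarrow> 'a::comm_ring_1"
  assumes ch: "prime CHAR('a)" "p = CHAR('a)" and UT: "is_UT n B" and e: "e \<ge> 1"
  shows "mat_inv n (Wseq p n B e) = Vseq p n (mat_inv n B) e"
proof -
  have p0: "p > 0" using ch prime_gt_0_nat by simp
  obtain e' where e': "e = Suc e'" using e by (cases e) auto
  show ?thesis
  proof (rule mat_inv_eqI)
    show "is_UT n (Wseq p n B e)" by (rule UT_Wseq[OF p0 UT])
    show "\<forall>i\<in>{1..n}. \<forall>j\<in>{1..n}. mat_mul n (Wseq p n B e) (Vseq p n (mat_inv n B) e) i j = idm i j"
      by (rule WV_inv[OF ch UT])
    show "\<forall>i j. \<not> (i \<in> {1..n} \<and> j \<in> {1..n}) \<longrightarrow> Vseq p n (mat_inv n B) e i j = 0"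
    proof (intro allI impI)
      fix i j assume "\<not> (i \<in> {1..n} \<and> j \<in> {1..n})"
      thus "Vseq p n (mat_inv n B) e i j = 0"
        unfolding e' using Vseq_outside[of p n "mat_inv n B" i j e', OF p0] mat_inv_outside[OF UT] by blast
    qed
  qed
qed




definition vge :: "'a::field fls \<Rightarrow> int \<Rightarrow> bool" where
  "vge x r \<longleftrightarrow> x = 0 \<or> r \<le> fls_subdegree x"

lemma vge_0 [simp]: "vge 0 r" by (simp add: vge_def)

lemma vge_mono: "vge x r \<Longrightarrow> r' \<le> r \<Longrightarrow> vge x r'"
  by (auto simp: vge_def)

lemma vge_add: "vge x r \<Longrightarrow> vge y r \<Longrightarrow> vge (x + y) r"
  unfolding vge_def using fls_plus_subdegree[of x y] by force

lemma vge_uminus: "vge (- x) r = vge x r"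
  by (simp add: vge_def)

lemma vge_diff: "vge x r \<Longrightarrow> vge y r \<Longrightarrow> vge (x - y) r"
  using vge_add[of x r "-y"] by (simp add: vge_uminus)

lemma vge_mult: "vge x r \<Longrightarrow> vge y s \<Longrightarrow> vge (x * y) (r + s)"
  by (cases "x = 0"; cases "y = 0") (auto simp: vge_def)

lemma vge_pow: "vge x r \<Longrightarrow> vge (x ^ k) (int k * r)"
  by (cases "k = 0") (auto simp: vge_def fls_subdegree_pow mult_left_mono zero_power)

lemma vge_sum: "(\<And>a. a \<in> S \<Longrightarrow> vge (f a) r) \<Longrightarrow> vge (\<Sum>a\<in>S. f a) r"
  by (induction S rule: infinite_finite_induct) (auto intro: vge_add)

lemma ineq1:
  fixes M :: int and Q p :: nat
  assumes "M \<ge> 1" "Q \<ge> 1" "p \<ge> 2"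
  shows "- (int Q * M) \<ge> - (int (p * Q) * M) + 1"
proof -
  have "int (p * Q) * M = int p * (int Q * M)" by simp
  moreover have "int Q * M \<ge> 1" using assms mult_mono[of 1 "int Q" 1 M] by simp
  moreover have "int p * (int Q * M) \<ge> 2 * (int Q * M)"
    using assms by (intro mult_right_mono) auto
  ultimately show ?thesis by linarith
qed

lemma ineq2:
  fixes M1 M2 M :: int and Q p :: nat
  assumes "M2 \<ge> 1" "Q \<ge> 1" "p \<ge> 2" "M1 + M2 \<le> M"
  shows "- (int (p * Q) * M1) + - (int Q * M2) \<ge> - (int (p * Q) * M) + 1"
proof -
  have a: "int (p * Q) * M \<ge> int (p * Q) * (M1 + M2)"
    using assms by (intro mult_left_mono) auto
  have "- (int Q * M2) \<ge> - (int (p * Q) * M2) + 1" by (rule ineq1) (use assms in auto)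
  with a show ?thesis by (simp add: algebra_simps)
qed

locale mstruct =
  fixes n :: nat and S :: "nat \<Rightarrow> nat \<Rightarrow> bool" and M :: "nat \<Rightarrow> nat \<Rightarrow> int"
  assumes M_pos: "\<And>i j. 1 \<le> i \<Longrightarrow> i < j \<Longrightarrow> j \<le> n \<Longrightarrow> S i j \<Longrightarrow> M i j \<ge> 1"
    and S_trans: "\<And>i k j. 1 \<le> i \<Longrightarrow> i < k \<Longrightarrow> k < j \<Longrightarrow> j \<le> n \<Longrightarrow> S i k \<Longrightarrow> S k j \<Longrightarrow> S i j"
    and M_super: "\<And>i k j. 1 \<le> i \<Longrightarrow> i < k \<Longrightarrow> k < j \<Longrightarrow> j \<le> n \<Longrightarrow> S i k \<Longrightarrow> S k j \<Longrightarrow> M i k + M k j \<le> M i j"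
begin

definition HB :: "(nat \<Rightarrow> nat \<Rightarrow> 'a::field fls) \<Rightarrow> bool" where
  "HB B \<longleftrightarrow> (\<forall>i j. 1 \<le> i \<and> i < j \<and> j \<le> n \<longrightarrow>
      (\<not> S i j \<longrightarrow> B i j = 0) \<and> (S i j \<longrightarrow> vge (B i j) (- M i j)))"

lemma HB_zero: "HB B \<Longrightarrow> 1 \<le> i \<Longrightarrow> i < j \<Longrightarrow> j \<le> n \<Longrightarrow> \<not> S i j \<Longrightarrow> B i j = 0"
  by (auto simp: HB_def)
lemma HB_vge: "HB B \<Longrightarrow> 1 \<le> i \<Longrightarrow> i < j \<Longrightarrow> j \<le> n \<Longrightarrow> S i j \<Longrightarrow> vge (B i j) (- M i j)"
  by (auto simp: HB_def)

lemma split3: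
  assumes "i < (j::nat)"
  shows "(\<Sum>k\<in>{i..j}. f k) = f i + f j + (\<Sum>k\<in>{i<..<j}. f k)"
proof -
  have "{i..j} = insert i (insert j {i<..<j})" using assms by auto
  thus ?thesis using assms by (simp add: add.assoc)
qed

lemma split2:
  assumes "i < (j::nat)"
  shows "(\<Sum>k\<in>{i<..j}. f k) = f j + (\<Sum>k\<in>{i<..<j}. f k)"
proof -
  have "{i<..j} = insert j {i<..<j}" using assms by auto
  thus ?thesis by simp
qed

lemma inv_HB:
  fixes B :: "nat \<Rightarrow> nat \<Rightarrow> 'a::field fls"
  assumes UT: "is_UT n B" and HB: "HB B"
  shows "HB (mat_inv n B)"
proof -
  have main: "1 \<le> i \<Longrightarrow> i < j \<Longrightarrow> j \<le> n \<Longrightarrow>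
      (\<not> S i j \<longrightarrow> mat_inv n B i j = 0) \<and> (S i j \<longrightarrow> vge (mat_inv n B i j) (- M i j))" for i j
  proof (induction "j - i" arbitrary: i rule: less_induct)
    case less
    have ij: "i \<in> {1..n}" "j \<in> {1..n}" using less.prems by auto
    have jj: "mat_inv n B j j = 1" using UT_diag[OF mat_inv_is_UT[OF UT] ij(2)] .
    have rec: "mat_inv n B i j = - (B i j + (\<Sum>k\<in>{i<..<j}. B i k * mat_inv n B k j))"
      using mat_inv_rec[OF UT ij less.prems(2)] split2[OF less.prems(2), of "\<lambda>k. B i k * mat_inv n B k j"] jj by simp
    have IH: "(\<not> S k j \<longrightarrow> mat_inv n B k j = 0) \<and> (S k j \<longrightarrow> vge (mat_inv n B k j) (- M k j))"
      if "k \<in> {i<..<j}" for k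
      using less.hyps[of k] that less.prems by auto
    have mid0: "B i k * mat_inv n B k j = 0" if "k \<in> {i<..<j}" "\<not> S i j" for k
      using IH[OF that(1)] HB_zero[OF HB, of i k] S_trans[of i k j] that less.prems by auto
    have midv: "vge (B i k * mat_inv n B k j) (- M i j)" if "k \<in> {i<..<j}" "S i j" for k
    proof (cases "S i k \<and> S k j")
      case True
      hence "vge (B i k * mat_inv n B k j) (- M i k + - M k j)"
        using IH[OF that(1)] HB_vge[OF HB, of i k] that less.prems True vge_mult[of "B i k" "- M i k" "mat_inv n B k j" "- M k j"] by auto
      thus ?thesis
        by (rule vge_mono) (use M_super[of i k j] True that less.prems in auto)
    next
      case False
      thus ?thesis using IH[OF that(1)] HB_zero[OF HB, of i k] that less.prems by auto
    qed
    show ?case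
    proof (intro conjI impI)
      assume "\<not> S i j"
      thus "mat_inv n B i j = 0" using rec mid0 HB_zero[OF HB less.prems] by simp
    next
      assume "S i j"
      thus "vge (mat_inv n B i j) (- M i j)"
        unfolding rec vge_uminus
        by (intro vge_add vge_sum midv HB_vge[OF HB less.prems]) auto
    qed
  qed
  show ?thesis unfolding HB_def using main by blast
qed


lemma pow_vge_M:
  "vge (x::'a::field fls) (- m) \<Longrightarrow> vge (x ^ P) (- (int P * m))"
  using vge_pow[of x "- m" P] by simp

lemma W_chain:
  fixes B :: "nat \<Rightarrow> nat \<Rightarrow> 'a::field fls"
  assumes p: "p \<ge> 2" and UT: "is_UT n B" and HB: "HB B"
  shows "1 \<le> i \<Longrightarrow> i < j \<Longrightarrow> j \<le> n \<Longrightarrow>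
    (\<not> S i j \<longrightarrow> Wseq p n B (Suc e) i j = 0) \<and>
    (S i j \<longrightarrow> vge (Wseq p n B (Suc e) i j) (- (int (p ^ e) * M i j)) \<and>
        vge (Wseq p n B (Suc e) i j - B i j ^ (p ^ e)) (- (int (p ^ e) * M i j) + 1))"
proof (induction e arbitrary: i j)
  case 0
  have "Wseq p n B (Suc 0) i j = B i j"
    using 0 by (simp add: mat_mul_idm_right frob_def)
  thus ?case using HB_zero[OF HB 0] HB_vge[OF HB 0] by simp
next
  case (Suc e)
  have p0: "p > 0" using p by simp
  define W where "W = Wseq p n B (Suc e)"
  define Q where "Q = p ^ e"
  define P where "P = p ^ Suc e"
  have PQ: "P = p * Q" by (simp add: P_def Q_def)
  have Q1: "Q \<ge> 1" using p0 by (simp add: Q_def)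
  have P0: "P > 0" using p0 by (simp add: P_def)
  have ij: "i \<in> {1..n}" "j \<in> {1..n}" using Suc.prems by auto
  have UTW: "is_UT n W" unfolding W_def by (rule UT_Wseq[OF p0 UT])
  have eq: "Wseq p n B (Suc (Suc e)) i j = (\<Sum>k\<in>{i..j}. B i k ^ P * W k j)"
  proof -
    have "Wseq p n B (Suc (Suc e)) i j = mat_mul n (frob p (Suc e) B) W i j" by (simp add: W_def)
    also have "mat_mul n (frob p (Suc e) B) W i j = (\<Sum>k\<in>{i..j}. frob p (Suc e) B i k * W k j)"
      by (rule mat_mul_UT_sum[OF UT_frob[where e="Suc e", OF p0 UT] UTW ij])
    finally show ?thesis by (simp add: P_def frob_def)
  qed
  define mid where "mid = (\<Sum>k\<in>{i<..<j}. B i k ^ P * W k j)"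
  have eq2: "Wseq p n B (Suc (Suc e)) i j = W i j + B i j ^ P + mid"
    unfolding eq mid_def split3[OF Suc.prems(2), of "\<lambda>k. B i k ^ P * W k j"]
    using UT_diag[OF UT ij(1)] UT_diag[OF UTW ij(2)] by simp
  have IHk: "(\<not> S k j \<longrightarrow> W k j = 0) \<and>
    (S k j \<longrightarrow> vge (W k j) (- (int Q * M k j)))" if "k \<in> {i<..<j}" for k
    using Suc.IH[of k j] that Suc.prems by (auto simp: W_def Q_def)
  have IHij: "(\<not> S i j \<longrightarrow> W i j = 0) \<and>
    (S i j \<longrightarrow> vge (W i j) (- (int Q * M i j)))"
    using Suc.IH[of i j] Suc.prems by (auto simp: W_def Q_def)
  show ?case
  proof (intro conjI impI)
    assume nS: "\<not> S i j"
    have "mid = 0" unfolding mid_def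
    proof (rule sum.neutral, intro ballI)
      fix k assume k: "k \<in> {i<..<j}"
      show "B i k ^ P * W k j = 0"
      proof (cases "S i k \<and> S k j")
        case True
        thus ?thesis using S_trans[of i k j] k Suc.prems nS by auto
      next
        case False
        thus ?thesis using IHk[OF k] HB_zero[OF HB, of i k] k Suc.prems P0 by (auto simp: zero_power)
      qed
    qed
    thus "Wseq p n B (Suc (Suc e)) i j = 0"
      using eq2 IHij nS HB_zero[OF HB Suc.prems nS] P0 by (simp add: zero_power)
  next
    assume Sij: "S i j"
    have Mij: "M i j \<ge> 1" using M_pos Suc.prems Sij by blast
    have midv: "vge mid (- (int P * M i j) + 1)" unfolding mid_def
    proof (rule vge_sum)
      fix k assume k: "k \<in> {i<..<j}"
      show "vge (B i k ^ P * W k j) (- (int P * M i j) + 1)"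
      proof (cases "S i k \<and> S k j")
        case True
        have a: "vge (B i k ^ P) (- (int P * M i k))"
          by (rule pow_vge_M) (use HB_vge[OF HB, of i k] True k Suc.prems in auto)
        have b: "vge (W k j) (- (int Q * M k j))" using IHk[OF k] True by simp
        have c: "M k j \<ge> 1" using M_pos[of k j] True k Suc.prems by auto
        have d: "M i k + M k j \<le> M i j" using M_super[of i k j] True k Suc.prems by auto
        show ?thesis
          by (rule vge_mono[OF vge_mult[OF a b]]) (use ineq2[OF c Q1 p d] PQ in simp)
      next
        case False
        thus ?thesis using IHk[OF k] HB_zero[OF HB, of i k] k Suc.prems P0 by (auto simp: zero_power)
      qed
    qed
    have wv: "vge (W i j) (- (int P * M i j) + 1)"
      by (rule vge_mono) (use IHij Sij ineq1[OF Mij Q1 p] PQ in auto)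
    have diff: "vge (Wseq p n B (Suc (Suc e)) i j - B i j ^ p ^ Suc e) (- (int (p ^ Suc e) * M i j) + 1)"
      using vge_add[OF wv midv] eq2 by (simp add: P_def algebra_simps)
    thus "vge (Wseq p n B (Suc (Suc e)) i j - B i j ^ p ^ Suc e) (- (int (p ^ Suc e) * M i j) + 1)" .
    have bv: "vge (B i j ^ P) (- (int P * M i j))"
      by (rule pow_vge_M) (use HB_vge[OF HB Suc.prems Sij] in auto)
    have "vge (B i j ^ P + (Wseq p n B (Suc (Suc e)) i j - B i j ^ P)) (- (int P * M i j))"
      by (rule vge_add[OF bv vge_mono[OF diff[folded P_def]]]) simp
    thus "vge (Wseq p n B (Suc (Suc e)) i j) (- (int (p ^ Suc e) * M i j))" by (simp add: P_def)
  qed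
qed


lemma V_chain:
  fixes C :: "nat \<Rightarrow> nat \<Rightarrow> 'a::field fls"
  assumes p: "p \<ge> 2" and UT: "is_UT n C" and HB: "HB C"
  shows "1 \<le> i \<Longrightarrow> i < j \<Longrightarrow> j \<le> n \<Longrightarrow>
    (\<not> S i j \<longrightarrow> Vseq p n C (Suc e) i j = 0) \<and>
    (S i j \<longrightarrow> vge (Vseq p n C (Suc e) i j) (- (int (p ^ e) * M i j)) \<and>
        vge (Vseq p n C (Suc e) i j - C i j ^ (p ^ e)) (- (int (p ^ e) * M i j) + 1))"
proof (induction e arbitrary: i j)
  case 0
  have "Vseq p n C (Suc 0) i j = C i j"
    using 0 by (simp add: mat_mul_idm_left frob_def)
  thus ?case using HB_zero[OF HB 0] HB_vge[OF HB 0] by simp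
next
  case (Suc e)
  have p0: "p > 0" using p by simp
  define V where "V = Vseq p n C (Suc e)"
  define Q where "Q = p ^ e"
  define P where "P = p ^ Suc e"
  have PQ: "P = p * Q" by (simp add: P_def Q_def)
  have Q1: "Q \<ge> 1" using p0 by (simp add: Q_def)
  have P0: "P > 0" using p0 by (simp add: P_def)
  have ij: "i \<in> {1..n}" "j \<in> {1..n}" using Suc.prems by auto
  have UTV: "is_UT n V" unfolding V_def by (rule UT_Vseq[OF p0 UT])
  have eq: "Vseq p n C (Suc (Suc e)) i j = (\<Sum>k\<in>{i..j}. V i k * C k j ^ P)"
  proof -
    have "Vseq p n C (Suc (Suc e)) i j = mat_mul n V (frob p (Suc e) C) i j" by (simp add: V_def)
    also have "mat_mul n V (frob p (Suc e) C) i j = (\<Sum>k\<in>{i..j}. V i k * frob p (Suc e) C k j)"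
      by (rule mat_mul_UT_sum[OF UTV UT_frob[where e="Suc e", OF p0 UT] ij])
    finally show ?thesis by (simp add: P_def frob_def)
  qed
  define mid where "mid = (\<Sum>k\<in>{i<..<j}. V i k * C k j ^ P)"
  have eq2: "Vseq p n C (Suc (Suc e)) i j = V i j + C i j ^ P + mid"
    unfolding eq mid_def split3[OF Suc.prems(2), of "\<lambda>k. V i k * C k j ^ P"]
    using UT_diag[OF UTV ij(1)] UT_diag[OF UT ij(2)] by (simp add: algebra_simps)
  have IHk: "(\<not> S i k \<longrightarrow> V i k = 0) \<and>
    (S i k \<longrightarrow> vge (V i k) (- (int Q * M i k)))" if "k \<in> {i<..<j}" for k
    using Suc.IH[of i k] that Suc.prems by (auto simp: V_def Q_def)
  have IHij: "(\<not> S i j \<longrightarrow> V i j = 0) \<and>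
    (S i j \<longrightarrow> vge (V i j) (- (int Q * M i j)))"
    using Suc.IH[of i j] Suc.prems by (auto simp: V_def Q_def)
  show ?case
  proof (intro conjI impI)
    assume nS: "\<not> S i j"
    have "mid = 0" unfolding mid_def
    proof (rule sum.neutral, intro ballI)
      fix k assume k: "k \<in> {i<..<j}"
      show "V i k * C k j ^ P = 0"
      proof (cases "S i k \<and> S k j")
        case True
        thus ?thesis using S_trans[of i k j] k Suc.prems nS by auto
      next
        case False
        thus ?thesis using IHk[OF k] HB_zero[OF HB, of k j] k Suc.prems P0 by (auto simp: zero_power)
      qed
    qed
    thus "Vseq p n C (Suc (Suc e)) i j = 0"
      using eq2 IHij nS HB_zero[OF HB Suc.prems nS] P0 by (simp add: zero_power)
  next
    assume Sij: "S i j"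
    have Mij: "M i j \<ge> 1" using M_pos Suc.prems Sij by blast
    have midv: "vge mid (- (int P * M i j) + 1)" unfolding mid_def
    proof (rule vge_sum)
      fix k assume k: "k \<in> {i<..<j}"
      show "vge (V i k * C k j ^ P) (- (int P * M i j) + 1)"
      proof (cases "S i k \<and> S k j")
        case True
        have a: "vge (C k j ^ P) (- (int P * M k j))"
          by (rule pow_vge_M) (use HB_vge[OF HB, of k j] True k Suc.prems in auto)
        have b: "vge (V i k) (- (int Q * M i k))" using IHk[OF k] True by simp
        have c: "M i k \<ge> 1" using M_pos[of i k] True k Suc.prems by auto
        have d: "M k j + M i k \<le> M i j" using M_super[of i k j] True k Suc.prems by auto
        show ?thesis
          by (rule vge_mono[OF vge_mult[OF b a]]) (use ineq2[OF c Q1 p d] PQ in simp)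
      next
        case False
        thus ?thesis using IHk[OF k] HB_zero[OF HB, of k j] k Suc.prems P0 by (auto simp: zero_power)
      qed
    qed
    have wv: "vge (V i j) (- (int P * M i j) + 1)"
      by (rule vge_mono) (use IHij Sij ineq1[OF Mij Q1 p] PQ in auto)
    have diff: "vge (Vseq p n C (Suc (Suc e)) i j - C i j ^ p ^ Suc e) (- (int (p ^ Suc e) * M i j) + 1)"
      using vge_add[OF wv midv] eq2 by (simp add: P_def algebra_simps)
    thus "vge (Vseq p n C (Suc (Suc e)) i j - C i j ^ p ^ Suc e) (- (int (p ^ Suc e) * M i j) + 1)" .
    have bv: "vge (C i j ^ P) (- (int P * M i j))"
      by (rule pow_vge_M) (use HB_vge[OF HB Suc.prems Sij] in auto)
    have "vge (C i j ^ P + (Vseq p n C (Suc (Suc e)) i j - C i j ^ P)) (- (int P * M i j))"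
      by (rule vge_add[OF bv vge_mono[OF diff[folded P_def]]]) simp
    thus "vge (Vseq p n C (Suc (Suc e)) i j) (- (int (p ^ Suc e) * M i j))" by (simp add: P_def)
  qed
qed

end




definition Qp :: "ereal \<Rightarrow> bool" where
  "Qp z \<longleftrightarrow> z = - \<infinity> \<or> (\<exists>m::int. z = ereal (real_of_int m) \<and> m \<ge> 1)"

lemma Qp_add: "Qp a \<Longrightarrow> Qp b \<Longrightarrow> Qp (a + b)"
  unfolding Qp_def
  by (elim disjE exE conjE; (intro disjI1; simp; fail)?) (rule disjI2, rule_tac x="m + ma" in exI, auto)

lemma m_part_single [simp]: "m_part A [x] = 0"
  by (simp add: m_part_def)

lemma m_part_cons2: "m_part A (x # y # r) = mexp A x y + m_part A (y # r)"
  unfolding m_part_def by (simp add: sum.lessThan_Suc_shift del: sum.lessThan_Suc)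

lemma m_part_append:
  assumes "ls1 \<noteq> []" "ls2 \<noteq> []" "last ls1 = hd ls2"
  shows "m_part A (ls1 @ tl ls2) = m_part A ls1 + m_part A ls2"
  using assms
proof (induction ls1 rule: induct_list012)
  case 1 thus ?case by simp
next
  case (2 x)
  thus ?case by (cases ls2) auto
next
  case (3 x y r)
  have "m_part A ((x # y # r) @ tl ls2) = mexp A x y + m_part A ((y # r) @ tl ls2)"
    by (simp add: m_part_cons2[symmetric])
  also have "m_part A ((y # r) @ tl ls2) = m_part A (y # r) + m_part A ls2"
    using 3 by simp
  finally show ?case by (simp add: m_part_cons2 add.assoc)
qed

lemma sorted_hd_last:
  "sorted_wrt (<) (ls::nat list) \<Longrightarrow> ls \<noteq> [] \<Longrightarrow> x \<in> set ls \<Longrightarrow> hd ls \<le> x \<and> x \<le> last ls"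
proof (induction ls arbitrary: x)
  case Nil thus ?case by simp
next
  case (Cons a r)
  show ?case
  proof (cases "r = []")
    case True thus ?thesis using Cons by simp
  next
    case False
    have "hd r \<in> set r" using False by simp
    hence "a < hd r" using Cons.prems(1) by simp
    have "hd r \<le> last r" using Cons.IH[of "hd r"] Cons.prems(1) False by simp
    have "last r \<in> set r" using False by simp
    hence "a < last r" using Cons.prems(1) by simp
    show ?thesis
    proof (cases "x = a")
      case True thus ?thesis using \<open>a < last r\<close> False by simp
    next
      case xa: False
      hence "x \<in> set r" using Cons.prems(3) by simp
      hence "hd r \<le> x \<and> x \<le> last r" using Cons.IH[of x] Cons.prems(1) False by simp
      thus ?thesis using \<open>a < hd r\<close> False by simp
    qed
  qed
qed

lemma partitions_props:
  assumes "ls \<in> partitions i j" "i < j"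
  shows "set ls \<subseteq> {i..j}" "length ls \<ge> 2" "sorted_wrt (<) ls"
proof -
  have a: "ls \<noteq> []" "hd ls = i" "last ls = j" "sorted_wrt (<) ls"
    using assms(1) by (auto simp: partitions_def)
  show "set ls \<subseteq> {i..j}" using sorted_hd_last[OF a(4) a(1)] a by auto
  show "sorted_wrt (<) ls" by fact
  show "length ls \<ge> 2"
  proof (rule ccontr)
    assume "\<not> length ls \<ge> 2"
    then obtain x where "ls = [x]" using a(1) by (cases ls; cases "tl ls") auto
    thus False using a assms(2) by simp
  qed
qed

lemma finite_partitions: "i < j \<Longrightarrow> finite (partitions i j)"
proof -
  assume ij: "i < j"
  have "partitions i j \<subseteq> {xs. set xs \<subseteq> {i..j} \<and> length xs \<le> card {i..j}}"
  proof
    fix ls assume ls: "ls \<in> partitions i j"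
    have s: "set ls \<subseteq> {i..j}" using partitions_props[OF ls ij] by simp
    have "distinct ls" using partitions_props(3)[OF ls ij] by (simp add: strict_sorted_iff)
    hence "length ls = card (set ls)" by (simp add: distinct_card)
    also have "\<dots> \<le> card {i..j}" by (rule card_mono) (use s in auto)
    finally show "ls \<in> {xs. set xs \<subseteq> {i..j} \<and> length xs \<le> card {i..j}}" using s by simp
  qed
  moreover have "finite {xs. set xs \<subseteq> {i..j} \<and> length xs \<le> card {i..j}}"
    by (rule finite_lists_length_le) simp
  ultimately show ?thesis by (rule finite_subset)
qed

lemma pair_partition: "i < j \<Longrightarrow> [i, j] \<in> partitions i j"
  by (simp add: partitions_def)

lemma mu_ge_mexp: "i < j \<Longrightarrow> mexp A i j \<le> mu A i j"
proof -
  assume ij: "i < j"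
  have "m_part A [i, j] \<le> mu A i j"
    unfolding mu_def by (intro Max_ge finite_imageI finite_partitions ij imageI pair_partition)
  thus ?thesis by (simp add: m_part_cons2)
qed

lemma mu_attained: "i < j \<Longrightarrow> \<exists>ls\<in>partitions i j. mu A i j = m_part A ls"
proof -
  assume ij: "i < j"
  have "mu A i j \<in> m_part A ` partitions i j"
    unfolding mu_def
    by (rule Max_in) (use finite_partitions[OF ij] pair_partition[OF ij] in auto)
  thus ?thesis by auto
qed

lemma mu_super:
  assumes "i < k" "k < j"
  shows "mu A i k + mu A k j \<le> mu A i j"
proof -
  obtain l1 where l1: "l1 \<in> partitions i k" "mu A i k = m_part A l1" using mu_attained[OF assms(1)] by blast
  obtain l2 where l2: "l2 \<in> partitions k j" "mu A k j = m_part A l2" using mu_attained[OF assms(2)] by blast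
  have a1: "l1 \<noteq> []" "hd l1 = i" "last l1 = k" "sorted_wrt (<) l1" using l1 by (auto simp: partitions_def)
  have a2: "l2 \<noteq> []" "hd l2 = k" "last l2 = j" "sorted_wrt (<) l2" using l2 by (auto simp: partitions_def)
  have len2: "length l2 \<ge> 2" using partitions_props(2)[OF l2(1) assms(2)] .
  define r where "r = tl l2"
  have r: "l2 = k # r" "r \<noteq> []" using a2 len2 unfolding r_def by (cases l2; auto)+
  have "l1 @ tl l2 \<in> partitions i j"
    unfolding partitions_def
  proof (intro CollectI conjI)
    show "l1 @ tl l2 \<noteq> []" using a1 by simp
    show "hd (l1 @ tl l2) = i" using a1 by simp
    show "last (l1 @ tl l2) = j" using a2 r by (simp add: last_ConsR[symmetric])
    have "x \<le> k" if "x \<in> set l1" for x using sorted_hd_last[OF a1(4) a1(1) that] a1 by simp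
    moreover have "k < y" if "y \<in> set r" for y using a2(4) r that by simp
    ultimately show "sorted_wrt (<) (l1 @ tl l2)"
      using a1(4) a2(4) r by (auto simp: sorted_wrt_append intro: le_less_trans)
  qed
  hence "m_part A (l1 @ tl l2) \<le> mu A i j"
    unfolding mu_def by (intro Max_ge finite_imageI finite_partitions) (use assms in auto)
  moreover have "m_part A (l1 @ tl l2) = m_part A l1 + m_part A l2"
    by (rule m_part_append) (use a1 a2 in auto)
  ultimately show ?thesis using l1 l2 by simp
qed


lemma mexp_Qp:
  assumes HA: "\<forall>i j l. 1 \<le> i \<and> i < j \<and> j \<le> n \<and> (int p dvd l \<or> l \<ge> 0) \<longrightarrow> coef (A i j) l = 0"
    and xy: "1 \<le> x" "x < y" "y \<le> n"
  shows "Qp (mexp A x y)"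
proof (cases "A x y = 0")
  case True thus ?thesis by (simp add: Qp_def mexp_def val_def)
next
  case False
  have "coef (A x y) (fls_subdegree (A x y)) \<noteq> 0" using False by (simp add: coef_def)
  hence "\<not> (fls_subdegree (A x y) \<ge> 0)"
    using spec[OF spec[OF spec[OF HA, of x], of y], of "fls_subdegree (A x y)"] xy by blast
  hence "fls_subdegree (A x y) < 0" by simp
  thus ?thesis using False
    by (auto simp: Qp_def mexp_def val_def intro!: exI[of _ "- fls_subdegree (A x y)"])
qed

lemma m_part_Qp:
  assumes HA: "\<forall>i j l. 1 \<le> i \<and> i < j \<and> j \<le> n \<and> (int p dvd l \<or> l \<ge> 0) \<longrightarrow> coef (A i j) l = 0"
  shows "sorted_wrt (<) ls \<Longrightarrow> set ls \<subseteq> {1..n} \<Longrightarrow> length ls \<ge> 2 \<Longrightarrow> Qp (m_part A ls)"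
proof (induction ls rule: induct_list012)
  case (3 x y zs)
  have q: "Qp (mexp A x y)" by (rule mexp_Qp[OF HA]) (use 3(3,4) in auto)
  show ?case
  proof (cases "zs = []")
    case True thus ?thesis using q by (simp add: m_part_cons2)
  next
    case False
    have "length (y # zs) \<ge> 2" using False by (cases zs) auto
    moreover have "sorted_wrt (<) (y # zs)" using 3(3) by simp
    moreover have "set (y # zs) \<subseteq> {1..n}" using 3(4) by simp
    ultimately have "Qp (m_part A (y # zs))" using 3(2) by blast
    thus ?thesis using q by (simp add: m_part_cons2 Qp_add)
  qed
qed simp_all

lemma mu_Qp:
  assumes HA: "\<forall>i j l. 1 \<le> i \<and> i < j \<and> j \<le> n \<and> (int p dvd l \<or> l \<ge> 0) \<longrightarrow> coef (A i j) l = 0"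
    and ij: "1 \<le> i" "i < j" "j \<le> n"
  shows "Qp (mu A i j)"
proof -
  obtain ls where ls: "ls \<in> partitions i j" "mu A i j = m_part A ls" using mu_attained[OF ij(2)] by blast
  show ?thesis unfolding ls(2)
    by (rule m_part_Qp[OF HA]) (use partitions_props[OF ls(1) ij(2)] ij in auto)
qed




lemma val_ge_vge: "vge x r \<Longrightarrow> val x \<ge> ereal (real_of_int r)"
  by (auto simp: vge_def val_def)

lemma val_eq_iff: "val x = ereal (real_of_int r) \<longleftrightarrow> x \<noteq> 0 \<and> fls_subdegree x = r"
  by (auto simp: val_def)

lemma key_iff:
  fixes x D W :: "'a::field fls" and m :: int and P :: nat
  assumes x: "vge x (- m)" and D: "vge D (- (int P * m) + 1)" and P: "P \<ge> 1" and W: "W = x ^ P + D"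
  shows "(W \<noteq> 0 \<and> fls_subdegree W = - (int P * m)) \<longleftrightarrow> (x \<noteq> 0 \<and> fls_subdegree x = - m)"
proof
  assume h: "x \<noteq> 0 \<and> fls_subdegree x = - m"
  have xP: "x ^ P \<noteq> 0" "fls_subdegree (x ^ P) = - (int P * m)"
    using h by (auto simp: fls_subdegree_pow)
  show "W \<noteq> 0 \<and> fls_subdegree W = - (int P * m)"
  proof (cases "D = 0")
    case True thus ?thesis using xP W by simp
  next
    case False
    hence Dg: "fls_subdegree D > fls_subdegree (x ^ P)" using D xP by (simp add: vge_def)
    have "fls_nth D (- (int P * m)) = 0"
      by (rule fls_eq0_below_subdegree) (use Dg xP in simp)
    hence "fls_nth W (- (int P * m)) \<noteq> 0"
      using W xP nth_fls_subdegree_nonzero[OF xP(1)] by simp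
    hence "W \<noteq> 0" by auto
    moreover have "fls_subdegree W = - (int P * m)"
      using fls_subdegree_add_eq1[OF xP(1) Dg] W xP by simp
    ultimately show ?thesis by simp
  qed
next
  assume h: "W \<noteq> 0 \<and> fls_subdegree W = - (int P * m)"
  show "x \<noteq> 0 \<and> fls_subdegree x = - m"
  proof (rule ccontr)
    assume "\<not> (x \<noteq> 0 \<and> fls_subdegree x = - m)"
    hence "vge x (- m + 1)" using x by (auto simp: vge_def)
    hence "vge (x ^ P) (int P * (- m + 1))" by (rule vge_pow)
    hence "vge (x ^ P) (- (int P * m) + 1)"
      by (rule vge_mono) (use P in \<open>simp add: algebra_simps\<close>)
    hence "vge W (- (int P * m) + 1)" using vge_add D W by blast
    thus False using h by (simp add: vge_def)
  qed
qed

theorem lemma16: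
  fixes p n N e i j :: nat
    and A :: "nat \<Rightarrow> nat \<Rightarrow> 'k::alg_closed_field fls"
  assumes "prime p" and "CHAR('k) = p"
    and "n \<ge> 2"
    and "is_UT n A"
    and "\<forall>i j l. 1 \<le> i \<and> i < j \<and> j \<le> n \<and> (int p dvd l \<or> l \<ge> 0) \<longrightarrow> coef (A i j) l = 0"
    and "\<exists>mA::real. - vUT n A = ereal mA \<and>
           real N > log (real p) (real n * (real p ^ (n * (n - 1) div 2) + 1) * mA + real p)
                    + real n * (real n - 1) / 2"
    and "1 \<le> e" and "e \<le> N"
    and "1 \<le> i" and "i < j" and "j \<le> n"
  shows
   "let q = p ^ N;
        AR = (\<lambda>a b. iota q (A a b));
        W = Wseq p n AR e;
        Winv = mat_inv n W;
        ARinv = mat_inv n AR;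
        Ainv = mat_inv n A;
        c = ereal (real (p ^ (e - 1)));
        \<mu> = mu A i j
    in val (W i j - AR i j ^ (p ^ (e - 1))) \<ge> - (c * \<mu>) + 1
     \<and> val (W i j) \<ge> - (c * \<mu>)
     \<and> (val (W i j) = - (c * \<mu>) \<longleftrightarrow> mexp A i j = \<mu>)
     \<and> val (Winv i j - ARinv i j ^ (p ^ (e - 1))) \<ge> - (c * \<mu>) + 1
     \<and> val (Winv i j) \<ge> - (c * \<mu>)
     \<and> (val (Winv i j) = - (c * \<mu>) \<longleftrightarrow> val (Ainv i j) = - \<mu>)"
proof -
  note HA = assms(5)
  have ij: "1 \<le> i" "i < j" "j \<le> n" using assms(9-11) .
  obtain e' where e': "e = Suc e'" using assms(7) by (cases e) auto
  define q where "q = p ^ N"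
  interpret K: charp p N q
    by unfold_locales (use assms(1,2) q_def in auto)
  have p2: "p \<ge> 2" using assms(1) prime_ge_2_nat by blast
  have p0: "p > 0" using p2 by simp
  define AR where "AR = (\<lambda>a b. iota q (A a b))"
  define S where "S = (\<lambda>a b. mu A a b \<noteq> - \<infinity>)"
  define M where "M = (\<lambda>a b. \<lfloor>real_of_ereal (mu A a b)\<rfloor>)"
  have muM: "mu A a b = ereal (real_of_int (M a b)) \<and> M a b \<ge> 1"
    if hh: "1 \<le> a" "a < b" "b \<le> n" "S a b" for a b
  proof -
    have "Qp (mu A a b)" by (rule mu_Qp[OF HA hh(1-3)])
    then obtain m where "mu A a b = ereal (real_of_int m)" "m \<ge> 1"
      using hh(4) unfolding Qp_def S_def by blast
    thus ?thesis by (simp add: M_def)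
  qed
  have muS: "mu A a b = - \<infinity>" if "\<not> S a b" for a b using that by (simp add: S_def)
  have super: "S a b \<and> M a k + M k b \<le> M a b"
    if h: "1 \<le> a" "a < k" "k < b" "b \<le> n" "S a k" "S k b" for a k b
  proof -
    have "mu A a k + mu A k b \<le> mu A a b" by (rule mu_super) (use h in auto)
    hence le: "ereal (real_of_int (M a k + M k b)) \<le> mu A a b"
      using muM[of a k] muM[of k b] h by simp
    hence Sab: "S a b" unfolding S_def by auto
    hence "mu A a b = ereal (real_of_int (M a b))" using muM[of a b] h by simp
    thus ?thesis using le Sab by simp
  qed
  interpret ms: mstruct n S M
  proof
    fix a b assume "1 \<le> a" "a < b" "b \<le> n" "S a b" thus "M a b \<ge> 1" using muM by blast
  next
    fix a k b assume "1 \<le> a" "a < k" "k < b" "b \<le> n" "S a k" "S k b"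
    thus "S a b" using super by blast
  next
    fix a k b assume "1 \<le> a" "a < k" "k < b" "b \<le> n" "S a k" "S k b"
    thus "M a k + M k b \<le> M a b" using super by blast
  qed
  have chK: "prime CHAR('k fls)" "p = CHAR('k fls)" using assms(1,2) by simp_all
  have UTAR: "is_UT n AR" using assms(4) by (auto simp: is_UT_def AR_def)
  have HBAR: "ms.HB AR"
    unfolding ms.HB_def
  proof (intro allI impI)
    fix a b assume h: "1 \<le> a \<and> a < b \<and> b \<le> n"
    have me: "mexp A a b \<le> mu A a b" using mu_ge_mexp h by blast
    show "(\<not> S a b \<longrightarrow> AR a b = 0) \<and> (S a b \<longrightarrow> vge (AR a b) (- M a b))"
    proof (intro conjI impI)
      assume "\<not> S a b"
      hence "mexp A a b = - \<infinity>" using me muS[of a b] by simp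
      hence "A a b = 0" by (simp add: mexp_def val_def split: if_splits)
      thus "AR a b = 0" by (simp add: AR_def)
    next
      assume "S a b"
      hence mu: "mu A a b = ereal (real_of_int (M a b))" using muM h by blast
      show "vge (AR a b) (- M a b)"
      proof (cases "A a b = 0")
        case True thus ?thesis by (simp add: AR_def)
      next
        case False
        hence "- real_of_int (fls_subdegree (A a b)) \<le> real_of_int (M a b)"
          using me mu by (simp add: mexp_def val_def)
        thus ?thesis by (simp add: vge_def AR_def K.iota_subdegree)
      qed
    qed
  qed
  define C where "C = mat_inv n AR"
  have UTC: "is_UT n C" unfolding C_def by (rule mat_inv_is_UT[OF UTAR])
  have HBC: "ms.HB C" unfolding C_def by (rule ms.inv_HB[OF UTAR HBAR])
  have Ciota: "C = (\<lambda>a b. iota q (mat_inv n A a b))"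
    unfolding C_def
  proof (rule mat_inv_eqI[OF UTAR])
    show "\<forall>a\<in>{1..n}. \<forall>b\<in>{1..n}. mat_mul n AR (\<lambda>a b. iota q (mat_inv n A a b)) a b = idm a b"
    proof (intro ballI)
      fix a b assume a: "a \<in> {1..n}" and b: "b \<in> {1..n}"
      have "mat_mul n AR (\<lambda>a b. iota q (mat_inv n A a b)) a b = iota q (mat_mul n A (mat_inv n A) a b)"
        by (simp add: mat_mul_def AR_def K.iota_sum K.iota_mult)
      also have "\<dots> = iota q (idm a b)" using mat_inv_right[OF assms(4) a b] by simp
      also have "\<dots> = idm a b" by (simp add: idm_def)
      finally show "mat_mul n AR (\<lambda>a b. iota q (mat_inv n A a b)) a b = idm a b" .
    qed
    show "\<forall>a b. \<not> (a \<in> {1..n} \<and> b \<in> {1..n}) \<longrightarrow> iota q (mat_inv n A a b) = 0"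
      using mat_inv_outside[OF assms(4)] by simp
  qed
  have Winv: "mat_inv n (Wseq p n AR e) = Vseq p n C e"
    unfolding C_def by (rule mat_inv_Wseq[OF chK UTAR assms(7)])
  note Wc = ms.W_chain[OF p2 UTAR HBAR ij(1) ij(2) ij(3), where e=e']
  note Vc = ms.V_chain[OF p2 UTC HBC ij(1) ij(2) ij(3), where e=e']
  have ee: "e - 1 = e'" using e' by simp
  define P where "P = p ^ e'"
  have P0: "P > 0" using p0 by (simp add: P_def)
  have main: "val (Wseq p n AR e i j - AR i j ^ P) \<ge> - (ereal (real P) * mu A i j) + 1
     \<and> val (Wseq p n AR e i j) \<ge> - (ereal (real P) * mu A i j)
     \<and> (val (Wseq p n AR e i j) = - (ereal (real P) * mu A i j) \<longleftrightarrow> mexp A i j = mu A i j)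
     \<and> val (Vseq p n C e i j - C i j ^ P) \<ge> - (ereal (real P) * mu A i j) + 1
     \<and> val (Vseq p n C e i j) \<ge> - (ereal (real P) * mu A i j)
     \<and> (val (Vseq p n C e i j) = - (ereal (real P) * mu A i j) \<longleftrightarrow> val (mat_inv n A i j) = - mu A i j)"
  proof (cases "S i j")
    case False
    have mu: "mu A i j = - \<infinity>" using muS[OF False] .
    have cinf: "ereal (real P) * - \<infinity> = - \<infinity>" using P0 by simp
    have W0: "Wseq p n AR e i j = 0" using Wc False e' by simp
    have V0: "Vseq p n C e i j = 0" using Vc False e' by simp
    have AR0: "AR i j = 0" using ms.HB_zero[OF HBAR ij False] .
    have C0: "C i j = 0" using ms.HB_zero[OF HBC ij False] .
    have Ai0: "mat_inv n A i j = 0" using C0 Ciota by (metis K.iota_eq_0_iff)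
    have me: "mexp A i j = - \<infinity>" using mu_ge_mexp[OF ij(2), of A] mu by simp
    show ?thesis using W0 V0 AR0 C0 Ai0 me mu cinf P0 by (simp add: val_def zero_power)
  next
    case True
    have mu: "mu A i j = ereal (real_of_int (M i j))" using muM ij True by blast
    have h1: "- (ereal (real P) * mu A i j) = ereal (real_of_int (- (int P * M i j)))"
      by (simp add: mu)
    have h2: "ereal (real_of_int (- (int P * M i j))) + 1 = ereal (real_of_int (- (int P * M i j) + 1))"
      by simp
    have h3: "- mu A i j = ereal (real_of_int (- M i j))" by (simp add: mu)
    have Wv: "vge (Wseq p n AR e i j) (- (int P * M i j))"
      and Wd: "vge (Wseq p n AR e i j - AR i j ^ P) (- (int P * M i j) + 1)"
      using Wc True e' by (simp_all add: P_def)
    have Vv: "vge (Vseq p n C e i j) (- (int P * M i j))"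
      and Vd: "vge (Vseq p n C e i j - C i j ^ P) (- (int P * M i j) + 1)"
      using Vc True e' by (simp_all add: P_def)
    have ARv: "vge (AR i j) (- M i j)" using ms.HB_vge[OF HBAR ij True] .
    have Cv: "vge (C i j) (- M i j)" using ms.HB_vge[OF HBC ij True] .
    have kW: "(Wseq p n AR e i j \<noteq> 0 \<and> fls_subdegree (Wseq p n AR e i j) = - (int P * M i j))
        \<longleftrightarrow> (AR i j \<noteq> 0 \<and> fls_subdegree (AR i j) = - M i j)"
      by (rule key_iff[OF ARv Wd]) (use P0 in auto)
    have kV: "(Vseq p n C e i j \<noteq> 0 \<and> fls_subdegree (Vseq p n C e i j) = - (int P * M i j))
        \<longleftrightarrow> (C i j \<noteq> 0 \<and> fls_subdegree (C i j) = - M i j)"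
      by (rule key_iff[OF Cv Vd]) (use P0 in auto)
    have mexp_iff: "mexp A i j = mu A i j \<longleftrightarrow> (AR i j \<noteq> 0 \<and> fls_subdegree (AR i j) = - M i j)"
      by (auto simp: mu mexp_def val_def AR_def K.iota_subdegree)
    have Ainv_iff: "val (mat_inv n A i j) = - mu A i j \<longleftrightarrow> (C i j \<noteq> 0 \<and> fls_subdegree (C i j) = - M i j)"
      unfolding h3 val_eq_iff by (simp add: Ciota K.iota_subdegree)
    show ?thesis
      unfolding h1 h2 mexp_iff Ainv_iff val_eq_iff kW[symmetric] kV[symmetric]
      using val_ge_vge[OF Wv] val_ge_vge[OF Wd] val_ge_vge[OF Vv] val_ge_vge[OF Vd]
      by blast
  qed
  have Winv': "mat_inv n (Wseq p n (\<lambda>a b. iota q (A a b)) e) = Vseq p n (mat_inv n (\<lambda>a b. iota q (A a b))) e"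
    using Winv by (simp add: C_def AR_def)
  show ?thesis
    unfolding Let_def q_def[symmetric] ee Winv'
    using main by (simp add: C_def AR_def P_def)
qed


end
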